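(* Let $W$ be the group of a reflection lattice, with a chosen set $\{r_i\}_{i\in I}$ of simple reflections. Let $\mathbf{i}=i_1i_2\cdots i_m$ be a minimal word, $\sigma\in W$ a reflection, and $n$ the number of times $\sigma$ appears in the sequence of reflections associated to $\mathbf{i}$. Suppose that $\sigma$ is a simple reflection, that $r(\mathbf{i})$ is a reflection which commutes with $\sigma$, and that $r(\mathbf{i})\neq\sigma$. Then $n=0$.
   Context: A reflection lattice is a free abelian group $L$ of finite rank with a finite subgroup $W\subset\mathrm{Aut}(L)$ generated by the reflections (automorphisms conjugate in $GL(r,\mathbb{Q})$ to $\mathrm{diag}(-1,1,\dots,1)$) it contains; $W$ is a finite Weyl group and a set of simple reflections $\{r_i\}_{i\in I}$ is a Coxeter generating set of reflections in the walls of a chamber. Let $\mathbf{I}$ be the free group on $I$ and $r:\mathbf{I}\to W$ the homomorphism with $r(i)=r_i$. A word is positive if it is a product of elements of $I$; its length is the number of factors. A positive word $\mathbf{i}$ is minimal if no positive word of smaller length has the same image under $r$. For a positive word $\mathbf{i}=i_1\cdots i_m$, the associated sequence of reflections is $\sigma_1,\dots,\sigma_m$ with $\sigma_k=r(i_1\cdots i_{k-1})\,r_{i_k}\,r(i_1\cdots i_{k-1})^{-1}$. *)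

theory Defs
  imports "HOL-Analysis.Analysis"
begin

text \<open>The lattice L is identified with the integer points of real^'n (rank = CARD('n));
automorphisms of L are integer matrices with integer inverse.\<close>

definition int_mat :: "real^'n^'n \<Rightarrow> bool" where
  "int_mat A \<longleftrightarrow> (\<forall>i j. A $ i $ j \<in> \<int>)"

definition rat_mat :: "real^'n^'n \<Rightarrow> bool" where
  "rat_mat A \<longleftrightarrow> (\<forall>i j. A $ i $ j \<in> \<rat>)"

definition lattice_aut :: "real^'n^'n \<Rightarrow> bool" where
  "lattice_aut A \<longleftrightarrow> int_mat A \<and> invertible A \<and> int_mat (matrix_inv A)"

definition refl_diag :: "'n \<Rightarrow> real^'n^'n" where
  "refl_diag k = (\<chi> i j. if i = j then (if i = k then -1 else 1) else 0)"

definition is_reflection :: "real^'n^'n \<Rightarrow> bool" where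
  "is_reflection s \<longleftrightarrow> (\<exists>P k. rat_mat P \<and> rat_mat (matrix_inv P) \<and> invertible P \<and>
       s = P ** refl_diag k ** matrix_inv P)"

inductive_set gen_by :: "(real^'n^'n) set \<Rightarrow> (real^'n^'n) set" for S where
  gen_one: "mat 1 \<in> gen_by S"
| gen_step: "s \<in> S \<Longrightarrow> x \<in> gen_by S \<Longrightarrow> s ** x \<in> gen_by S"

definition reflection_group :: "(real^'n^'n) set \<Rightarrow> bool" where
  "reflection_group W \<longleftrightarrow> finite W \<and> (\<forall>A\<in>W. lattice_aut A) \<and> mat 1 \<in> W \<and>
     (\<forall>A\<in>W. \<forall>B\<in>W. A ** B \<in> W) \<and> (\<forall>A\<in>W. matrix_inv A \<in> W) \<and>
     W = gen_by {s\<in>W. is_reflection s}"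

definition refl_hyperplane :: "real^'n^'n \<Rightarrow> (real^'n) set" where
  "refl_hyperplane s = {x. s *v x = x}"

definition hyperplane_complement :: "(real^'n^'n) set \<Rightarrow> (real^'n) set" where
  "hyperplane_complement W = UNIV - (\<Union>s\<in>{s\<in>W. is_reflection s}. refl_hyperplane s)"

definition is_chamber :: "(real^'n^'n) set \<Rightarrow> (real^'n) set \<Rightarrow> bool" where
  "is_chamber W C \<longleftrightarrow> (\<exists>x\<in>hyperplane_complement W.
      C = connected_component_set (hyperplane_complement W) x)"

definition is_wall_reflection :: "(real^'n) set \<Rightarrow> real^'n^'n \<Rightarrow> bool" where
  "is_wall_reflection C s \<longleftrightarrow> (\<exists>x\<in>refl_hyperplane s. \<exists>e>0.
      ball x e \<inter> refl_hyperplane s \<subseteq> closure C)"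

definition simple_reflections ::
  "(real^'n^'n) set \<Rightarrow> 'i set \<Rightarrow> ('i \<Rightarrow> real^'n^'n) \<Rightarrow> bool" where
  "simple_reflections W I r \<longleftrightarrow> (\<exists>C. is_chamber W C \<and> inj_on r I \<and>
      r ` I = {s\<in>W. is_reflection s \<and> is_wall_reflection C s})"

fun word_eval :: "('i \<Rightarrow> real^'n^'n) \<Rightarrow> 'i list \<Rightarrow> real^'n^'n" where
  "word_eval r [] = mat 1"
| "word_eval r (i # w) = r i ** word_eval r w"

definition minimal_word :: "'i set \<Rightarrow> ('i \<Rightarrow> real^'n^'n) \<Rightarrow> 'i list \<Rightarrow> bool" where
  "minimal_word I r w \<longleftrightarrow> set w \<subseteq> I \<and>
     (\<forall>v. set v \<subseteq> I \<and> word_eval r v = word_eval r w \<longrightarrow> length w \<le> length v)"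

text \<open>k-th reflection of the associated sequence (0-indexed: k = 0..m-1 corresponds to
 sigma_(k+1) = r(i_1...i_k) r_(i_(k+1)) r(i_1...i_k)^(-1)).\<close>
definition refl_seq :: "('i \<Rightarrow> real^'n^'n) \<Rightarrow> 'i list \<Rightarrow> nat \<Rightarrow> real^'n^'n" where
  "refl_seq r w k = word_eval r (take k w) ** r (w ! k) ** matrix_inv (word_eval r (take k w))"

definition occurrences :: "('i \<Rightarrow> real^'n^'n) \<Rightarrow> 'i list \<Rightarrow> real^'n^'n \<Rightarrow> nat" where
  "occurrences r w \<sigma> = card {k. k < length w \<and> refl_seq r w k = \<sigma>}"

end

theory Submission
  imports Defs
begin

lemma minv:
  fixes A :: "real^'n^'n"
  assumes "invertible A"
  shows "A ** matrix_inv A = mat 1" "matrix_inv A ** A = mat 1"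
proof -
  have "\<exists>A'. A ** A' = mat 1 \<and> A' ** A = mat 1" using assms unfolding invertible_def by blast
  then have "A ** matrix_inv A = mat 1 \<and> matrix_inv A ** A = mat 1"
    unfolding matrix_inv_def by (rule someI_ex)
  then show "A ** matrix_inv A = mat 1" "matrix_inv A ** A = mat 1" by auto
qed

lemma minv_unique:
  fixes A B :: "real^'n^'n"
  assumes "A ** B = mat 1" "B ** A = mat 1"
  shows "matrix_inv A = B"
proof -
  have inv: "invertible A" using assms unfolding invertible_def by blast
  have "matrix_inv A = matrix_inv A ** (A ** B)" using assms by simp
  also have "\<dots> = (matrix_inv A ** A) ** B" by (simp add: matrix_mul_assoc)
  also have "\<dots> = B" using minv[OF inv] by simp
  finally show ?thesis .
qed

lemma rat_mat_mul:
  fixes A B :: "real^'n^'n"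
  assumes "rat_mat A" "rat_mat B"
  shows "rat_mat (A ** B)"
  using assms unfolding rat_mat_def matrix_matrix_mult_def
  by (auto intro!: Rats_sum Rats_mult)

lemma int_rat_mat: "int_mat A \<Longrightarrow> rat_mat A"
  unfolding int_mat_def rat_mat_def using Ints_subset_Rats by blast

lemma refl_form:
  fixes s :: "real^'n^'n"
  assumes "is_reflection s"
  shows "\<exists>a v. a \<bullet> v = 1 \<and> (\<forall>x. s *v x = x - (2 * (a \<bullet> x)) *\<^sub>R v)"
proof -
  obtain P :: "real^'n^'n" and k where P: "invertible P" "s = P ** refl_diag k ** matrix_inv P"
    using assms unfolding is_reflection_def by blast
  define Q where "Q = matrix_inv P"
  have PQ: "P ** Q = mat 1" "Q ** P = mat 1" using minv[OF P(1)] Q_def by auto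
  have D: "refl_diag k *v y = y - (2 * y $ k) *\<^sub>R axis k 1" for y :: "real^'n"
  proof -
    have "(refl_diag k *v y) $ i = (y - (2 * y $ k) *\<^sub>R axis k 1) $ i" for i
    proof -
      have "(refl_diag k *v y) $ i = (\<Sum>j\<in>UNIV. (if j = i then (if i = k then -1 else 1) * y $ j else 0))"
        unfolding refl_diag_def matrix_vector_mult_def vec_lambda_beta by (intro sum.cong) auto
      also have "\<dots> = (if i = k then -1 else 1) * y $ i" by simp
      finally show ?thesis by (auto simp: axis_def)
    qed
    then show ?thesis by (simp add: vec_eq_iff)
  qed
  define v where "v = P *v axis k 1"
  have PQx: "P *v (Q *v x) = x" for x by (simp add: matrix_vector_mul_assoc PQ)
  have "Q$k \<bullet> v = 1"
    by (simp add: v_def matrix_vector_mul_component[symmetric] matrix_vector_mul_assoc PQ axis_def)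
  moreover have "s *v x = x - (2 * (Q$k \<bullet> x)) *\<^sub>R v" for x
  proof -
    have "s *v x = P *v (refl_diag k *v (Q *v x))"
      by (simp add: P(2) Q_def matrix_vector_mul_assoc matrix_mul_assoc)
    also have "\<dots> = x - (2 * (Q$k \<bullet> x)) *\<^sub>R v"
      by (simp add: D matrix_vector_mult_diff_distrib matrix_vector_mult_scaleR
          matrix_vector_mul_assoc[symmetric] PQ PQx v_def matrix_vector_mul_component)
    finally show ?thesis .
  qed
  ultimately show ?thesis by blast
qed

lemma refl_sq:
  fixes s :: "real^'n^'n"
  assumes "is_reflection s"
  shows "s ** s = mat 1"
proof -
  obtain a v where av: "a \<bullet> v = 1" "\<And>x. s *v x = x - (2 * (a \<bullet> x)) *\<^sub>R v"
    using refl_form[OF assms] by blast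
  have "(s ** s) *v x = mat 1 *v x" for x
    by (simp add: matrix_vector_mul_assoc[symmetric] av inner_diff_right inner_scaleR_right
        scaleR_diff_left scaleR_diff_right)
  then show ?thesis using matrix_eq by blast
qed

lemma refl_fix:
  fixes s :: "real^'n^'n"
  assumes "a \<bullet> v = 1" "\<And>x. s *v x = x - (2 * (a \<bullet> x)) *\<^sub>R v"
  shows "s *v y = y \<longleftrightarrow> a \<bullet> y = 0"
proof
  assume "s *v y = y"
  then have "a \<bullet> (s *v y) = a \<bullet> y" by simp
  then show "a \<bullet> y = 0" using assms by (simp add: inner_diff_right)
qed (simp add: assms)

lemma iter_in:
  assumes "\<forall>A\<in>W. \<forall>B\<in>W. A ** B \<in> W" "mat 1 \<in> W" "A \<in> W"
  shows "(((**) A) ^^ k) (mat 1) \<in> W"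
  using assms by (induction k) auto

lemma refl_uniq:
  fixes \<sigma> \<tau> :: "real^'n^'n"
  assumes W: "finite W" "\<forall>A\<in>W. \<forall>B\<in>W. A ** B \<in> W" "mat 1 \<in> W"
    and in_W: "\<sigma> \<in> W" "\<tau> \<in> W"
    and r: "is_reflection \<sigma>" "is_reflection \<tau>"
    and fx: "\<And>y. \<tau> *v y = y \<Longrightarrow> \<sigma> *v y = y"
  shows "\<sigma> = \<tau>"
proof -
  obtain a v where av: "a \<bullet> v = 1" "\<And>x. \<sigma> *v x = x - (2 * (a \<bullet> x)) *\<^sub>R v"
    using refl_form[OF r(1)] by blast
  obtain b w where bw: "b \<bullet> w = 1" "\<And>x. \<tau> *v x = x - (2 * (b \<bullet> x)) *\<^sub>R w"
    using refl_form[OF r(2)] by blast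
  have ker: "a \<bullet> y = 0" if "b \<bullet> y = 0" for y
    using fx[of y] refl_fix[OF av] refl_fix[OF bw] that by blast
  define c where "c = a \<bullet> w"
  have fa: "a \<bullet> x = (b \<bullet> x) * c" for x
  proof -
    have "b \<bullet> (x - (b \<bullet> x) *\<^sub>R w) = 0" using bw(1) by (simp add: inner_diff_right)
    then have "a \<bullet> (x - (b \<bullet> x) *\<^sub>R w) = 0" by (rule ker)
    then show ?thesis by (simp add: inner_diff_right c_def)
  qed
  define n where "n = (2 * c) *\<^sub>R v - 2 *\<^sub>R w"
  have bn: "b \<bullet> n = 0"
  proof -
    have "a \<bullet> v = (b \<bullet> v) * c" by (rule fa)
    then show ?thesis using av(1) bw(1) by (simp add: n_def inner_diff_right algebra_simps)
  qed
  define A where "A = \<sigma> ** \<tau>"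
  have Ax: "A *v x = x + (b \<bullet> x) *\<^sub>R n" for x
  proof -
    have "A *v x = \<sigma> *v (\<tau> *v x)" by (simp add: A_def matrix_vector_mul_assoc)
    also have "\<dots> = x + (b \<bullet> x) *\<^sub>R n"
    proof -
      have t1: "a \<bullet> (\<tau> *v x) = - ((b \<bullet> x) * c)"
        by (simp add: bw inner_diff_right fa bw(1))
      have "\<sigma> *v (\<tau> *v x) = x - (2 * (b \<bullet> x)) *\<^sub>R w + (2 * ((b \<bullet> x) * c)) *\<^sub>R v"
        unfolding av(2) t1 by (simp add: bw(2))
      also have "\<dots> = x + (b \<bullet> x) *\<^sub>R n"
        by (simp add: n_def scaleR_diff_right scaleR_scaleR mult_ac)
      finally show ?thesis .
    qed
    finally show ?thesis .
  qed
  define M where "M k = (((**) A) ^^ k) (mat 1)" for k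
  have Mx: "M k *v x = x + (real k * (b \<bullet> x)) *\<^sub>R n" for k x
  proof (induction k)
    case 0 then show ?case by (simp add: M_def)
  next
    case (Suc k)
    have "M (Suc k) *v x = A *v (M k *v x)" by (simp add: M_def matrix_vector_mul_assoc)
    also have "\<dots> = x + (real (Suc k) * (b \<bullet> x)) *\<^sub>R n"
      by (simp add: Suc Ax inner_add_right bn algebra_simps)
    finally show ?case .
  qed
  have AW: "A \<in> W" using W(2) in_W A_def by blast
  have "range M \<subseteq> W" using iter_in[OF W(2,3) AW] M_def by auto
  then have "finite (range M)" using W(1) finite_subset by blast
  then have "\<not> inj M" using infinite_UNIV_nat finite_imageD by blast
  then obtain p q where pq: "p \<noteq> q" "M p = M q" unfolding inj_def by blast
  have "M p *v w = M q *v w" using pq by simp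
  then have "real p *\<^sub>R n = real q *\<^sub>R n" using bw(1) by (simp add: Mx)
  then have n0: "n = 0" using pq(1) by (metis of_nat_eq_iff scaleR_cancel_right)
  then have "(2::real) *\<^sub>R w = 2 *\<^sub>R (c *\<^sub>R v)" by (simp add: n_def scaleR_scaleR mult.commute)
  then have wv: "w = c *\<^sub>R v" by (metis scaleR_cancel_left zero_neq_numeral)
  have "\<sigma> *v x = \<tau> *v x" for x by (simp add: av bw wv fa)
  then show ?thesis using matrix_eq by blast
qed

lemma W_facts:
  assumes "reflection_group W" "A \<in> W"
  shows "invertible A" "A ** matrix_inv A = mat 1" "matrix_inv A ** A = mat 1"
    "matrix_inv A \<in> W" "lattice_aut A"
  using assms minv unfolding reflection_group_def lattice_aut_def by blast+

lemma conj_refl: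
  fixes g h s :: "real^'n^'n"
  assumes "lattice_aut g" "lattice_aut h" "h ** g = mat 1" "g ** h = mat 1"
    and "is_reflection s"
  shows "is_reflection (h ** s ** g)"
proof -
  obtain P :: "real^'n^'n" and k where P: "rat_mat P" "rat_mat (matrix_inv P)" "invertible P"
    "s = P ** refl_diag k ** matrix_inv P"
    using assms(5) unfolding is_reflection_def by blast
  define P' where "P' = h ** P"
  define Q' where "Q' = matrix_inv P ** g"
  have PQ: "P ** matrix_inv P = mat 1" "matrix_inv P ** P = mat 1" using minv[OF P(3)] by auto
  have 1: "P' ** Q' = mat 1"
  proof -
    have "P' ** Q' = h ** (P ** matrix_inv P) ** g" by (simp add: P'_def Q'_def matrix_mul_assoc)
    then show ?thesis using PQ assms(3) by simp
  qed
  have 2: "Q' ** P' = mat 1"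
  proof -
    have "Q' ** P' = matrix_inv P ** (g ** h) ** P" by (simp add: P'_def Q'_def matrix_mul_assoc)
    then show ?thesis using PQ assms(4) by simp
  qed
  have mi: "matrix_inv P' = Q'" using minv_unique[OF 1 2] .
  have inv: "invertible P'" using 1 2 unfolding invertible_def by blast
  have r1: "rat_mat P'" unfolding P'_def
    using rat_mat_mul int_rat_mat assms(2) P(1) unfolding lattice_aut_def by blast
  have r2: "rat_mat (matrix_inv P')" unfolding mi Q'_def
    using rat_mat_mul int_rat_mat assms(1) P(2) unfolding lattice_aut_def by blast
  have "h ** s ** g = P' ** refl_diag k ** matrix_inv P'"
    unfolding mi by (simp add: P'_def Q'_def P(4) matrix_mul_assoc)
  then show ?thesis unfolding is_reflection_def using r1 r2 inv by blast
qed

lemma compl_move: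
  assumes W: "reflection_group W" and x: "x \<in> hyperplane_complement W"
    and g: "g \<in> W" and s: "s \<in> W" "is_reflection s"
  shows "s *v (g *v x) \<noteq> g *v x"
proof
  assume eq: "s *v (g *v x) = g *v x"
  define t where "t = matrix_inv g ** s ** g"
  have gi: "matrix_inv g \<in> W" "g ** matrix_inv g = mat 1" "matrix_inv g ** g = mat 1"
    using W_facts[OF W g] by auto
  have "is_reflection t" unfolding t_def
    using conj_refl[OF W_facts(5)[OF W g] W_facts(5)[OF W gi(1)] gi(3) gi(2) s(2)] .
  moreover have "t \<in> W" using W gi(1) g s(1) unfolding t_def reflection_group_def by blast
  moreover have "t *v x = x"
  proof -
    have "t *v x = matrix_inv g *v (s *v (g *v x))" by (simp add: t_def matrix_vector_mul_assoc matrix_mul_assoc)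
    also have "\<dots> = (matrix_inv g ** g) *v x" using eq by (simp add: matrix_vector_mul_assoc)
    finally show ?thesis using gi(3) by simp
  qed
  ultimately show False using x unfolding hyperplane_complement_def refl_hyperplane_def by blast
qed

lemma word_eval_append: "word_eval r (xs @ ys) = word_eval r xs ** word_eval r ys"
  by (induction xs) (auto simp: matrix_mul_assoc)

lemma word_eval_in:
  assumes "reflection_group W" "r ` I \<subseteq> W" "set xs \<subseteq> I"
  shows "word_eval r xs \<in> W"
  using assms(3)
proof (induction xs)
  case Nil then show ?case using assms(1) unfolding reflection_group_def by simp
next
  case (Cons i xs)
  then show ?case using assms(1,2) unfolding reflection_group_def by auto
qed

lemma sign_const:
  fixes g :: "'a::topological_space \<Rightarrow> real"
  assumes "connected S" "continuous_on S g" "\<And>x. x \<in> S \<Longrightarrow> g x \<noteq> 0"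
    "x \<in> S" "y \<in> S" "g x > 0"
  shows "g y > 0"
proof (rule ccontr)
  assume "\<not> g y > 0"
  then have "g y < 0" using assms(3,5) by force
  have "connected (g ` S)" using connected_continuous_image assms(1,2) by blast
  moreover have "g y \<in> g ` S" "g x \<in> g ` S" using assms(4,5) by auto
  ultimately have "0 \<in> g ` S"
    using connectedD_interval[of "g ` S" "g y" "g x" 0] \<open>g y < 0\<close> assms(6) by auto
  then show False using assms(3) by auto
qed

lemma vec_aux:
  fixes X v :: "'a::real_vector"
  assumes "X - v = v - X - d *\<^sub>R v"
  shows "X + X = (2 - d) *\<^sub>R v"
proof -
  have "X + X = v + v - d *\<^sub>R v" using assms by (simp add: algebra_simps)
  then show ?thesis by (simp add: scaleR_diff_left scaleR_2)
qed

lemma commute_side: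
  fixes t \<sigma> :: "real^'n^'n"
  assumes t: "is_reflection t"
    and av: "a \<bullet> v = 1" "\<And>x. \<sigma> *v x = x - (2 * (a \<bullet> x)) *\<^sub>R v"
    and comm: "t ** \<sigma> = \<sigma> ** t" and ne: "t \<noteq> \<sigma>"
  shows "a \<bullet> (t *v x) = a \<bullet> x"
proof -
  obtain b w where bw: "b \<bullet> w = 1" "\<And>x. t *v x = x - (2 * (b \<bullet> x)) *\<^sub>R w"
    using refl_form[OF t] by blast
  have E: "t *v (\<sigma> *v y) = \<sigma> *v (t *v y)" for y
    by (simp add: matrix_vector_mul_assoc comm)
  have aw: "a \<bullet> w = 0"
  proof (rule ccontr)
    assume aw0: "a \<bullet> w \<noteq> 0"
    have star: "(a \<bullet> y) * (b \<bullet> v) = b \<bullet> y" for y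
    proof -
      have h1: "a \<bullet> (\<sigma> *v z) = - (a \<bullet> z)" for z
        by (simp add: av inner_diff_right)
      have h2: "b \<bullet> (\<sigma> *v z) = b \<bullet> z - 2 * (a \<bullet> z) * (b \<bullet> v)" for z
        by (simp add: av inner_diff_right)
      have h3: "a \<bullet> (t *v z) = a \<bullet> z - 2 * (b \<bullet> z) * (a \<bullet> w)" for z
        by (simp add: bw inner_diff_right)
      have "a \<bullet> (t *v (\<sigma> *v y)) = a \<bullet> (\<sigma> *v (t *v y))" using E by simp
      then have "- (a \<bullet> y) - 2 * (b \<bullet> y - 2 * (a \<bullet> y) * (b \<bullet> v)) * (a \<bullet> w)
          = - (a \<bullet> y - 2 * (b \<bullet> y) * (a \<bullet> w))"
        by (simp only: h1 h2 h3)
      then have "(a \<bullet> y) * (b \<bullet> v) * (a \<bullet> w) = (b \<bullet> y) * (a \<bullet> w)"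
        by (simp add: algebra_simps)
      then show ?thesis using aw0 by simp
    qed
    have bv: "(a \<bullet> w) * (b \<bullet> v) = 1" using star[of w] bw(1) by simp
    then have bv0: "b \<bullet> v \<noteq> 0" by auto
    have sv: "\<sigma> *v v = - v" using av by (simp add: scaleR_2)
    have L: "t *v (\<sigma> *v v) = (2 * (b \<bullet> v)) *\<^sub>R w - v"
    proof -
      have "t *v (0 - v) = t *v 0 - (t *v v)"
        by (rule matrix_vector_mult_diff_distrib)
      then have "t *v (- v) = - (t *v v)" by simp
      then show ?thesis unfolding sv using bw(2)[of v] by simp
    qed
    have atv: "a \<bullet> (t *v v) = 1 - 2 * (b \<bullet> v) * (a \<bullet> w)"
      by (simp add: bw(2) inner_diff_right av(1))
    have R: "\<sigma> *v (t *v v) = v - (2 * (b \<bullet> v)) *\<^sub>R w - (2 * (1 - 2 * (b \<bullet> v) * (a \<bullet> w))) *\<^sub>R v"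
    proof -
      have "\<sigma> *v (t *v v) = t *v v - (2 * (a \<bullet> (t *v v))) *\<^sub>R v" by (rule av(2))
      then show ?thesis unfolding atv by (simp only: bw(2)[of v])
    qed
    have "(2 * (b \<bullet> v)) *\<^sub>R w - v = v - (2 * (b \<bullet> v)) *\<^sub>R w - (2 * (1 - 2 * (b \<bullet> v) * (a \<bullet> w))) *\<^sub>R v"
      using E[of v] unfolding L R .
    then have "(2 * (b \<bullet> v)) *\<^sub>R w + (2 * (b \<bullet> v)) *\<^sub>R w = (2 - 2 * (1 - 2 * (b \<bullet> v) * (a \<bullet> w))) *\<^sub>R v"
      by (rule vec_aux)
    moreover have "(2 * (b \<bullet> v)) *\<^sub>R w + (2 * (b \<bullet> v)) *\<^sub>R w = (4 * (b \<bullet> v)) *\<^sub>R w"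
    proof -
      have "(2 * (b \<bullet> v)) *\<^sub>R w + (2 * (b \<bullet> v)) *\<^sub>R w = (2 * (b \<bullet> v) + 2 * (b \<bullet> v)) *\<^sub>R w"
        by (rule scaleR_left_distrib[symmetric])
      also have "2 * (b \<bullet> v) + 2 * (b \<bullet> v) = 4 * (b \<bullet> v)" by simp
      finally show ?thesis .
    qed
    moreover have "(2 - 2 * (1 - 2 * (b \<bullet> v) * (a \<bullet> w))) *\<^sub>R v = (4 * (b \<bullet> v)) *\<^sub>R ((a \<bullet> w) *\<^sub>R v)"
    proof -
      have "(2 - 2 * (1 - 2 * (b \<bullet> v) * (a \<bullet> w))) = (4 * (b \<bullet> v)) * (a \<bullet> w)"
        by (simp add: algebra_simps)
      then show ?thesis by (simp only: scaleR_scaleR)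
    qed
    ultimately have "(4 * (b \<bullet> v)) *\<^sub>R w = (4 * (b \<bullet> v)) *\<^sub>R ((a \<bullet> w) *\<^sub>R v)"
      by simp
    then have wv: "w = (a \<bullet> w) *\<^sub>R v" using bv0 scaleR_cancel_left by (metis mult_eq_0_iff zero_neq_numeral)
    have "t *v y = \<sigma> *v y" for y
    proof -
      have sy: "b \<bullet> y = (a \<bullet> y) * (b \<bullet> v)" using star[of y] by simp
      have re: "2 * (b \<bullet> y) * (a \<bullet> w) = 2 * (a \<bullet> y)"
      proof -
        have "2 * (b \<bullet> y) * (a \<bullet> w) = 2 * (a \<bullet> y) * ((a \<bullet> w) * (b \<bullet> v))"
          unfolding sy by (simp only: mult_ac)
        then show ?thesis using bv by simp
      qed
      have "t *v y = y - (2 * (b \<bullet> y)) *\<^sub>R ((a \<bullet> w) *\<^sub>R v)" using bw(2) wv by metis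
      also have "\<dots> = y - (2 * (b \<bullet> y) * (a \<bullet> w)) *\<^sub>R v" by (simp only: scaleR_scaleR)
      also have "\<dots> = \<sigma> *v y" unfolding re using av(2) by simp
      finally show ?thesis .
    qed
    then have "t = \<sigma>" using matrix_eq by blast
    then show False using ne by simp
  qed
  show ?thesis using aw by (simp add: bw(2) inner_diff_right)
qed


lemma g_lin:
  fixes u :: "real^'n^'m"
  shows "a \<bullet> (u *v (p + d *\<^sub>R z)) = a \<bullet> (u *v p) + d * (a \<bullet> (u *v z))"
  by (simp add: matrix_vector_right_distrib matrix_vector_mult_scaleR inner_add_right)

lemma cont_g:
  fixes u :: "real^'n^'m"
  shows "continuous_on S (\<lambda>x. a \<bullet> (u *v x))"
  by (intro continuous_on_inner continuous_on_const matrix_vector_mult_linear_continuous_on)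

lemma step_side:
  fixes u s \<sigma> :: "real^'n^'n"
  assumes W: "reflection_group W"
    and Cc: "connected C" "C \<subseteq> hyperplane_complement W" "x0 \<in> C"
    and s: "s \<in> W" "is_reflection s" "is_wall_reflection C s"
    and u: "u \<in> W"
    and sg: "\<sigma> \<in> W" "is_reflection \<sigma>"
    and av: "a \<bullet> v = 1" "\<And>x. \<sigma> *v x = x - (2 * (a \<bullet> x)) *\<^sub>R v"
    and ne: "u ** s ** matrix_inv u \<noteq> \<sigma>"
  shows "(a \<bullet> (u *v x0) > 0) = (a \<bullet> ((u ** s) *v x0) > 0)"
proof (rule ccontr)
  assume neq: "\<not> ?thesis"
  define g1 where "g1 x = a \<bullet> (u *v x)" for x
  define g2 where "g2 x = a \<bullet> ((u ** s) *v x)" for x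
  have WW: "\<forall>A\<in>W. \<forall>B\<in>W. A ** B \<in> W" "finite W" "mat 1 \<in> W"
    using W unfolding reflection_group_def by auto
  have us: "u ** s \<in> W" using WW u s by blast
  have nz1: "g1 x \<noteq> 0" if "x \<in> C" for x
  proof
    assume "g1 x = 0"
    then have "\<sigma> *v (u *v x) = u *v x" using refl_fix[OF av] g1_def by simp
    moreover have "x \<in> hyperplane_complement W" using that Cc(2) by blast
    ultimately show False using compl_move[OF W _ u sg] by blast
  qed
  have nz2: "g2 x \<noteq> 0" if "x \<in> C" for x
  proof
    assume "g2 x = 0"
    then have "\<sigma> *v ((u ** s) *v x) = (u ** s) *v x" using refl_fix[OF av] g2_def by simp
    moreover have "x \<in> hyperplane_complement W" using that Cc(2) by blast
    ultimately show False using compl_move[OF W _ us sg] by blast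
  qed
  have c1: "continuous_on S g1" for S unfolding g1_def by (rule cont_g)
  have c2: "continuous_on S g2" for S unfolding g2_def by (rule cont_g)
  define c where "c = g1 x0"
  have c0: "c \<noteq> 0" using nz1[OF Cc(3)] unfolding c_def .
  have pos1: "g1 x * c > 0" if "x \<in> C" for x
  proof (rule sign_const[OF Cc(1), of "\<lambda>x. g1 x * c" x0])
    show "continuous_on C (\<lambda>x. g1 x * c)" by (intro continuous_intros c1)
    show "\<And>x. x \<in> C \<Longrightarrow> g1 x * c \<noteq> 0" using nz1 c0 by simp
    show "x0 \<in> C" by (rule Cc(3))
    show "x \<in> C" by (rule that)
    show "0 < g1 x0 * c" unfolding c_def[symmetric] using c0 not_real_square_gt_zero by blast
  qed
  have neg2: "- (g2 x * c) > 0" if "x \<in> C" for x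
  proof (rule sign_const[OF Cc(1), of "\<lambda>x. - (g2 x * c)" x0])
    show "continuous_on C (\<lambda>x. - (g2 x * c))" by (intro continuous_intros c2)
    show "\<And>x. x \<in> C \<Longrightarrow> - (g2 x * c) \<noteq> 0" using nz2 c0 by simp
    show "0 < - (g2 x0 * c)"
    proof -
      have H2: "g2 x0 \<noteq> 0" using nz2 Cc(3) by blast
      have H3: "\<not> (g1 x0 > 0 \<longleftrightarrow> g2 x0 > 0)" using neq unfolding g1_def g2_def .
      have "g2 x0 * g1 x0 < 0"
      proof (cases "g1 x0 > 0")
        case True
        then have "g2 x0 < 0" using H2 H3 by auto
        then show ?thesis using True by (rule mult_neg_pos)
      next
        case False
        then have "g1 x0 < 0" using nz1[OF Cc(3)] by auto
        moreover have "g2 x0 > 0" using False H2 H3 by auto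
        ultimately show ?thesis by (simp add: mult_pos_neg)
      qed
      then have "g2 x0 * c < 0" unfolding c_def .
      then show ?thesis by simp
    qed
    show "x0 \<in> C" by (rule Cc(3))
    show "x \<in> C" by (rule that)
  qed
  have cl1: "closure C \<subseteq> {x. 0 \<le> g1 x * c}"
  proof (rule closure_minimal)
    show "C \<subseteq> {x. 0 \<le> g1 x * c}" using pos1 by (auto simp: less_imp_le)
    show "closed {x. 0 \<le> g1 x * c}"
      by (intro closed_Collect_le continuous_intros c1)
  qed
  have cl2: "closure C \<subseteq> {x. 0 \<le> - (g2 x * c)}"
  proof (rule closure_minimal)
    show "C \<subseteq> {x. 0 \<le> - (g2 x * c)}" using neg2 by (auto simp: less_imp_le)
    show "closed {x. 0 \<le> - (g2 x * c)}"
      by (intro closed_Collect_le continuous_intros c2)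
  qed
  obtain p e where pe: "p \<in> refl_hyperplane s" "e > 0"
    "ball p e \<inter> refl_hyperplane s \<subseteq> closure C"
    using s(3) unfolding is_wall_reflection_def by blast
  have zero_on: "g1 z = 0" if "z \<in> ball p e \<inter> refl_hyperplane s" for z
  proof -
    have "s *v z = z" using that unfolding refl_hyperplane_def by auto
    then have "g2 z = g1 z" unfolding g1_def g2_def by (simp add: matrix_vector_mul_assoc[symmetric])
    moreover have "z \<in> closure C" using that pe(3) by blast
    ultimately have "0 \<le> g1 z * c" "0 \<le> - (g1 z * c)" using cl1 cl2 by auto
    then show ?thesis using c0 by simp
  qed
  have ker: "g1 z = 0" if "s *v z = z" for z
  proof -
    define d where "d = e / (2 * (norm z + 1))"
    have np0: "0 < norm z + 1" using norm_ge_zero[of z] by linarith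
    have np: "0 < 2 * (norm z + 1)" using np0 by simp
    have d0: "d > 0" using pe(2) np unfolding d_def by (rule divide_pos_pos)
    have "d * norm z < e"
    proof -
      have "d * norm z = e * (norm z / (2 * (norm z + 1)))" by (simp add: d_def)
      also have "norm z / (2 * (norm z + 1)) < 1"
        unfolding pos_divide_less_eq[OF np] using np0 by simp
      then have "e * (norm z / (2 * (norm z + 1))) < e * 1"
        using pe(2) by (intro mult_strict_left_mono) auto
      finally show ?thesis by simp
    qed
    then have "p + d *\<^sub>R z \<in> ball p e" using d0 by (simp add: dist_norm)
    moreover have "s *v (p + d *\<^sub>R z) = p + d *\<^sub>R z"
      using pe(1) that unfolding refl_hyperplane_def
      by (simp add: matrix_vector_right_distrib matrix_vector_mult_scaleR)
    ultimately have "g1 (p + d *\<^sub>R z) = 0" using zero_on unfolding refl_hyperplane_def by blast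
    moreover have "g1 p = 0" using zero_on pe(1,2) by simp
    ultimately have "d * g1 z = 0" unfolding g1_def by (simp add: g_lin)
    then show ?thesis using d0 by simp
  qed
  define \<tau> where "\<tau> = u ** s ** matrix_inv u"
  have ui: "matrix_inv u \<in> W" "u ** matrix_inv u = mat 1" "matrix_inv u ** u = mat 1"
    using W_facts[OF W u] by auto
  have tr: "is_reflection \<tau>" unfolding \<tau>_def
    using conj_refl[OF W_facts(5)[OF W ui(1)] W_facts(5)[OF W u] ui(2) ui(3) s(2)] .
  have tW: "\<tau> \<in> W" unfolding \<tau>_def using WW us ui(1) by blast
  have fx: "\<sigma> *v y = y" if "\<tau> *v y = y" for y
  proof -
    have "matrix_inv u *v (\<tau> *v y) = s *v (matrix_inv u *v y)"
      unfolding \<tau>_def by (simp add: matrix_vector_mul_assoc matrix_mul_assoc ui(3))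
    then have "s *v (matrix_inv u *v y) = matrix_inv u *v y" using that by simp
    then have "g1 (matrix_inv u *v y) = 0" by (rule ker)
    then have "a \<bullet> y = 0" unfolding g1_def by (simp add: matrix_vector_mul_assoc ui(2))
    then show ?thesis using refl_fix[OF av] by blast
  qed
  have "\<sigma> = \<tau>" using refl_uniq[OF WW(2) WW(1) WW(3) sg(1) tW sg(2) tr fx] by blast
  then show False using ne \<tau>_def by simp
qed


lemma take_suc_eval:
  assumes "j < length w"
  shows "word_eval r (take (Suc j) w) = word_eval r (take j w) ** r (w ! j)"
  using assms by (simp add: take_Suc_conv_app_nth word_eval_append)

lemma seq_mul:
  assumes W: "reflection_group W" and rI: "r ` I \<subseteq> W" and w: "set w \<subseteq> I" and j: "j < length w"
  shows "refl_seq r w j ** word_eval r (take j w) = word_eval r (take (Suc j) w)"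
proof -
  define U where "U = word_eval r (take j w)"
  have UW: "U \<in> W" unfolding U_def
    using word_eval_in[OF W rI] w set_take_subset[of j w] by blast
  have "refl_seq r w j ** U = U ** r (w ! j) ** (matrix_inv U ** U)"
    unfolding refl_seq_def U_def[symmetric] by (simp add: matrix_mul_assoc)
  also have "\<dots> = U ** r (w ! j)" using W_facts(3)[OF W UW] by simp
  finally show ?thesis using take_suc_eval[OF j, of r] U_def by simp
qed

lemma seq_mul2:
  assumes W: "reflection_group W" and rI: "r ` I \<subseteq> W" and w: "set w \<subseteq> I" and j: "j < length w"
    and sq: "r (w ! j) ** r (w ! j) = mat 1"
  shows "refl_seq r w j ** word_eval r (take (Suc j) w) = word_eval r (take j w)"
proof -
  have "refl_seq r w j ** word_eval r (take (Suc j) w)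
      = (refl_seq r w j ** word_eval r (take j w)) ** r (w ! j)"
    using take_suc_eval[OF j, of r] by (simp add: matrix_mul_assoc)
  also have "\<dots> = word_eval r (take j w) ** (r (w ! j) ** r (w ! j))"
    using seq_mul[OF assms(1-4)] take_suc_eval[OF j, of r] by (simp add: matrix_mul_assoc)
  finally show ?thesis using sq by simp
qed

lemma distinct_seq:
  assumes W: "reflection_group W" and rI: "r ` I \<subseteq> W"
    and sq: "\<And>i. i \<in> I \<Longrightarrow> r i ** r i = mat 1"
    and mw: "minimal_word I r w" and kl: "k < l" "l < length w"
  shows "refl_seq r w k \<noteq> refl_seq r w l"
proof
  assume eq: "refl_seq r w k = refl_seq r w l"
  define \<sigma> where "\<sigma> = refl_seq r w l"
  have w: "set w \<subseteq> I" using mw unfolding minimal_word_def by blast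
  have k: "k < length w" using kl by simp
  have sqk: "r (w ! k) ** r (w ! k) = mat 1" using sq w k nth_mem by blast
  define B where "B = word_eval r (drop (Suc k) (take l w))"
  define D where "D = word_eval r (drop (Suc l) w)"
  have tl: "take l w = take (Suc k) w @ drop (Suc k) (take l w)"
  proof -
    have "take (Suc k) (take l w) = take (Suc k) w" using kl by (simp add: min_def)
    then show ?thesis by (metis append_take_drop_id)
  qed
  have ul: "word_eval r (take l w) = word_eval r (take (Suc k) w) ** B"
    using tl B_def by (metis word_eval_append)
  have "word_eval r w = word_eval r (take (Suc l) w) ** D"
    unfolding D_def by (metis append_take_drop_id word_eval_append)
  also have "word_eval r (take (Suc l) w) = \<sigma> ** word_eval r (take l w)"
    using seq_mul[OF W rI w kl(2)] \<sigma>_def by simp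
  also have "\<sigma> ** word_eval r (take l w) = (\<sigma> ** word_eval r (take (Suc k) w)) ** B"
    unfolding ul by (simp add: matrix_mul_assoc)
  also have "\<sigma> ** word_eval r (take (Suc k) w) = word_eval r (take k w)"
    using seq_mul2[OF W rI w k sqk] eq \<sigma>_def by simp
  finally have ev: "word_eval r w = word_eval r (take k w) ** B ** D" .
  define v' where "v' = take k w @ drop (Suc k) (take l w) @ drop (Suc l) w"
  have "word_eval r v' = word_eval r w"
    unfolding ev v'_def B_def D_def by (simp add: word_eval_append matrix_mul_assoc)
  moreover have "set v' \<subseteq> I" unfolding v'_def using w
    by (auto dest: in_set_takeD in_set_dropD)
  ultimately have "length w \<le> length v'" using mw unfolding minimal_word_def by blast
  moreover have "length v' < length w" unfolding v'_def using kl by simp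
  ultimately show False by simp
qed


theorem proposition4p9:
  fixes W :: "(real^'n^'n) set" and I :: "'i set" and r :: "'i \<Rightarrow> real^'n^'n"
    and w :: "'i list" and \<sigma> :: "real^'n^'n"
  assumes "reflection_group W"
    and "simple_reflections W I r"
    and "minimal_word I r w"
    and "\<sigma> \<in> W" and "is_reflection \<sigma>"
    and "\<sigma> \<in> r ` I"
    and "is_reflection (word_eval r w)"
    and "word_eval r w ** \<sigma> = \<sigma> ** word_eval r w"
    and "word_eval r w \<noteq> \<sigma>"
  shows "occurrences r w \<sigma> = 0"
proof -
  note W = assms(1)
  have WW: "\<forall>A\<in>W. \<forall>B\<in>W. A ** B \<in> W" "finite W" "mat 1 \<in> W"
    using W unfolding reflection_group_def by auto
  obtain C where C: "is_chamber W C" "inj_on r I"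
    "r ` I = {s\<in>W. is_reflection s \<and> is_wall_reflection C s}"
    using assms(2) unfolding simple_reflections_def by blast
  have rI: "r ` I \<subseteq> W" using C(3) by blast
  have rprops: "r i \<in> W" "is_reflection (r i)" "is_wall_reflection C (r i)" if "i \<in> I" for i
    using C(3) that by blast+
  have sq: "r i ** r i = mat 1" if "i \<in> I" for i using refl_sq rprops(2) that by blast
  obtain x0 where x0: "x0 \<in> hyperplane_complement W"
    "C = connected_component_set (hyperplane_complement W) x0"
    using C(1) unfolding is_chamber_def by blast
  have Cc: "connected C" "C \<subseteq> hyperplane_complement W" "x0 \<in> C"
    using x0 connected_connected_component connected_component_subset connected_component_refl
    by (auto simp: mem_Collect_eq)
  obtain a v where av: "a \<bullet> v = 1" "\<And>x. \<sigma> *v x = x - (2 * (a \<bullet> x)) *\<^sub>R v"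
    using refl_form[OF assms(5)] by blast
  have wI: "set w \<subseteq> I" using assms(3) unfolding minimal_word_def by blast
  define m where "m = length w"
  define u where "u j = word_eval r (take j w)" for j
  have uW: "u j \<in> W" for j unfolding u_def
    using word_eval_in[OF W rI] wI set_take_subset[of j w] by blast
  define P where "P k \<longleftrightarrow> refl_seq r w k = \<sigma>" for k
  define N where "N j = card {k. k < j \<and> P k}" for j
  have Nsuc: "N (Suc j) = N j + (if P j then 1 else 0)" for j
  proof -
    have "{k. k < Suc j \<and> P k} = {k. k < j \<and> P k} \<union> (if P j then {j} else {})"
      by (auto simp: less_Suc_eq)
    then show ?thesis unfolding N_def by (auto simp: card_insert_if)
  qed
  have nz: "a \<bullet> (u j *v x0) \<noteq> 0" for j
  proof
    assume "a \<bullet> (u j *v x0) = 0"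
    then have "\<sigma> *v (u j *v x0) = u j *v x0" using refl_fix[OF av] by simp
    then show False using compl_move[OF W x0(1) uW assms(4,5)] by blast
  qed
  have claim: "((a \<bullet> (u j *v x0) > 0) \<longleftrightarrow> (a \<bullet> x0 > 0)) \<longleftrightarrow> even (N j)" if "j \<le> m" for j
    using that
  proof (induction j)
    case 0
    then show ?case by (simp add: u_def N_def)
  next
    case (Suc j)
    then have j: "j < length w" using m_def by simp
    have i: "w ! j \<in> I" using wI j nth_mem by blast
    have us: "u (Suc j) = u j ** r (w ! j)" unfolding u_def by (rule take_suc_eval[OF j])
    show ?case
    proof (cases "P j")
      case True
      have "u (Suc j) = \<sigma> ** u j"
        using seq_mul[OF W rI wI j] True unfolding P_def u_def by simp
      then have "a \<bullet> (u (Suc j) *v x0) = - (a \<bullet> (u j *v x0))"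
        by (simp add: matrix_vector_mul_assoc[symmetric] av inner_diff_right)
      then show ?thesis using Suc nz[of j] True Nsuc[of j] by auto
    next
      case False
      have ne: "u j ** r (w ! j) ** matrix_inv (u j) \<noteq> \<sigma>"
        using False unfolding P_def refl_seq_def u_def by simp
      have "(a \<bullet> (u j *v x0) > 0) = (a \<bullet> ((u j ** r (w ! j)) *v x0) > 0)"
        by (rule step_side[OF W Cc rprops[OF i] uW assms(4,5) av ne])
      then show ?thesis using Suc False Nsuc[of j] us by auto
    qed
  qed
  have um: "u m = word_eval r w" unfolding u_def m_def by simp
  have "a \<bullet> (u m *v x0) = a \<bullet> x0"
    unfolding um by (rule commute_side[OF assms(7) av assms(8,9)])
  moreover have "a \<bullet> x0 \<noteq> 0" using nz[of 0] by (simp add: u_def)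
  ultimately have ev: "even (N m)" using claim[of m] by auto
  have le1: "N m \<le> 1"
  proof -
    have "card {k. k < m \<and> P k} \<le> Suc 0"
    proof (subst card_le_Suc0_iff_eq)
      show "finite {k. k < m \<and> P k}" by simp
      show "\<forall>x\<in>{k. k < m \<and> P k}. \<forall>y\<in>{k. k < m \<and> P k}. x = y"
      proof (intro ballI, rule ccontr)
        fix x y assume xy: "x \<in> {k. k < m \<and> P k}" "y \<in> {k. k < m \<and> P k}" "x \<noteq> y"
        then have "refl_seq r w x = refl_seq r w y" unfolding P_def by simp
        moreover have "x < y \<or> y < x" using xy(3) by arith
        ultimately show False
          using distinct_seq[OF W rI sq assms(3)] xy unfolding m_def by (metis mem_Collect_eq)
      qed
    qed
    then show ?thesis unfolding N_def by simp
  qed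
  have "N m = 0" using ev le1 by presburger
  moreover have "occurrences r w \<sigma> = N m"
    unfolding occurrences_def N_def P_def m_def by simp
  ultimately show ?thesis by simp
qed

end
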